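(* Let $n\in\mathbb{N}$, $f:\{0,1\}^n\to\mathbb{R}$ and $\alpha,\beta>0$. Define $g:[0,1]\to\mathbb{R}$ by $g(p)=\mathbb{E}_{X_1,\dots,X_n\sim p}[f(X)]$, where $X_1,\dots,X_n$ are independent $\mathsf{Bernoulli}(p)$. Then $$\mathbb{E}_{P\sim\mathsf{Beta}(\alpha,\beta),\ X_1,\dots,X_n\sim P}\Big[f(X)\sum_{i\in[n]}(X_i-P)\Big]=(\alpha+\beta)\,\mathbb{E}_{P\sim\mathsf{Beta}(\alpha,\beta)}\Big[g(P)\Big(P-\frac{\alpha}{\alpha+\beta}\Big)\Big],$$ where on the left $X_1,\dots,X_n$ are independent $\mathsf{Bernoulli}(P)$ conditioned on $P$.
   Context: $\mathsf{Beta}(\alpha,\beta)$ is the distribution on $[0,1]$ with density $p^{\alpha-1}(1-p)^{\beta-1}/\mathsf{B}(\alpha,\beta)$, where $\mathsf{B}(\alpha,\beta)=\int_0^1p^{\alpha-1}(1-p)^{\beta-1}\,dp$. *)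

theory Defs
  imports "HOL-Probability.Probability"
begin

definition beta_fun :: "real \<Rightarrow> real \<Rightarrow> real" where
  "beta_fun a b = (LBINT p=0..1. p powr (a - 1) * (1 - p) powr (b - 1))"

definition beta_density :: "real \<Rightarrow> real \<Rightarrow> real \<Rightarrow> real" where
  "beta_density a b p = indicator {0..1} p * p powr (a - 1) * (1 - p) powr (b - 1) / beta_fun a b"

definition beta_measure :: "real \<Rightarrow> real \<Rightarrow> real measure" where
  "beta_measure a b = density lborel (\<lambda>p. ennreal (beta_density a b p))"

text \<open>Law of n i.i.d. Bernoulli(p) bits X_0..X_{n-1}, encoded as functions nat => bool
  (True = 1), with value False outside {..<n}.\<close>
definition bern_prod :: "nat \<Rightarrow> real \<Rightarrow> (nat \<Rightarrow> bool) pmf" where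
  "bern_prod n p = Pi_pmf {..<n} False (\<lambda>_. bernoulli_pmf p)"

end

theory Submission
  imports Defs
begin

definition Tm :: "real \<Rightarrow> real \<Rightarrow> real \<Rightarrow> real" where
  "Tm A B p = indicator {0..1} p * (p powr (A - 1) * (1 - p) powr (B - 1))"

lemma Tm_int:
  assumes "A > 0" "B > 0"
  shows "integrable lborel (Tm A B)" "integral\<^sup>L lborel (Tm A B) = Beta A B"
proof -
  have si: "set_integrable lborel {0..1} (\<lambda>t. t powr (A - 1) * (1 - t) powr (B - 1))"
    by (rule integrable_Beta[OF assms])
  have eq: "Tm A B = (\<lambda>x. indicator {0..1} x *\<^sub>R (x powr (A - 1) * (1 - x) powr (B - 1)))"
    by (auto simp: Tm_def fun_eq_iff)
  show "integrable lborel (Tm A B)" using si unfolding eq set_integrable_def .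
  have "integral\<^sup>L lborel (Tm A B) = (LINT x : {0..1} | lborel. x powr (A - 1) * (1 - x) powr (B - 1))"
    unfolding eq set_lebesgue_integral_def ..
  also have "\<dots> = integral {0..1} (\<lambda>x. x powr (A - 1) * (1 - x) powr (B - 1))"
    by (rule set_borel_integral_eq_integral(2)[OF si])
  also have "\<dots> = Beta A B" by (rule integral_unique[OF has_integral_Beta_real[OF assms]])
  finally show "integral\<^sup>L lborel (Tm A B) = Beta A B" .
qed

lemma Tm_shift: "p * Tm A B p = Tm (A + 1) B p"
proof (cases "p = 0")
  case False
  then show ?thesis
    by (cases "p \<in> {0..1}") (auto simp: Tm_def powr_add powr_diff)
qed (simp add: Tm_def)

lemma pw: "(p::real) \<ge> 0 \<Longrightarrow> p powr c * p ^ k = p powr (c + real k)"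
  by (cases "p = 0") (auto simp: powr_add powr_realpow)

lemma Tm_comb:
  assumes "A > 0" "B > 0"
  shows "integrable lborel (\<lambda>P. u * Tm A B P + v * Tm (A+1) B P)"
        "(\<integral>P. u * Tm A B P + v * Tm (A+1) B P \<partial>lborel) = u * Beta A B + v * Beta (A+1) B"
proof -
  have i1: "integrable lborel (Tm A B)" and i2: "integrable lborel (Tm (A+1) B)"
    using Tm_int assms by auto
  show "integrable lborel (\<lambda>P. u * Tm A B P + v * Tm (A+1) B P)" using i1 i2 by auto
  show "(\<integral>P. u * Tm A B P + v * Tm (A+1) B P \<partial>lborel) = u * Beta A B + v * Beta (A+1) B"
    using i1 i2 Tm_int assms by (simp add: integral_add)
qed

lemma pmf_bp:
  assumes "\<forall>i. i \<notin> {..<n} \<longrightarrow> x i = False" "0 \<le> P" "P \<le> 1"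
  shows "pmf (bern_prod n P) x = P ^ card ({..<n} \<inter> {i. x i}) * (1 - P) ^ (n - card ({..<n} \<inter> {i. x i}))"
proof -
  have "pmf (bern_prod n P) x = (\<Prod>i<n. if x i then P else 1 - P)"
    unfolding bern_prod_def using assms by (subst pmf_Pi') (auto intro!: prod.cong)
  also have "\<dots> = P ^ card ({..<n} \<inter> {i. x i}) * (1 - P) ^ card ({..<n} \<inter> - {i. x i})"
    by (simp add: prod.If_cases)
  also have "card ({..<n} \<inter> - {i. x i}) = n - card ({..<n} \<inter> {i. x i})"
  proof -
    have "{..<n} \<inter> - {i. x i} = {..<n} - ({..<n} \<inter> {i. x i})" by auto
    then show ?thesis by (simp add: card_Diff_subset)
  qed
  finally show ?thesis .
qed

lemma sum_ind: "(\<Sum>i<n. (if X i then 1 else 0) - (P::real)) = real (card ({..<n} \<inter> {i. X i})) - real n * P"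
proof -
  have "(\<Sum>i<n. (if X i then 1 else (0::real))) = real (card ({..<n} \<inter> {i. X i}))"
    by (simp add: sum.If_cases)
  then show ?thesis by (simp add: sum_subtractf)
qed

context begin
interpretation pmf_as_function .
lemma bern_clip: "bernoulli_pmf p = bernoulli_pmf (min 1 (max 0 p))"
proof (rule pmf_eqI)
  fix b :: bool
  have t: "pmf (bernoulli_pmf p) True = min 1 (max 0 p)" for p by transfer simp
  have f: "pmf (bernoulli_pmf p) False = 1 - min 1 (max 0 p)" for p by transfer simp
  show "pmf (bernoulli_pmf p) b = pmf (bernoulli_pmf (min 1 (max 0 p))) b"
    by (cases b) (auto simp: t f)
qed
lemma bp_clip: "bern_prod n P = bern_prod n (min 1 (max 0 P))"
  unfolding bern_prod_def by (subst bern_clip) simp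

lemma bp_exp:
  fixes h :: "(nat \<Rightarrow> bool) \<Rightarrow> real" and n :: nat
  defines "S \<equiv> {x::nat\<Rightarrow>bool. \<forall>i. i \<notin> {..<n} \<longrightarrow> x i = False}"
  shows "measure_pmf.expectation (bern_prod n P) h =
    (\<Sum>x\<in>S. h x * ((min 1 (max 0 P)) ^ card ({..<n} \<inter> {i. x i}) * (1 - min 1 (max 0 P)) ^ (n - card ({..<n} \<inter> {i. x i}))))"
proof -
  have fin: "finite S"
  proof -
    have "S = PiE_dflt {..<n} False (\<lambda>_. UNIV)" by (auto simp: S_def PiE_dflt_def)
    then show ?thesis by auto
  qed
  have "measure_pmf.expectation (bern_prod n P) h = measure_pmf.expectation (bern_prod n (min 1 (max 0 P))) h"
    by (subst bp_clip) simp
  also have "\<dots> = (\<Sum>x\<in>S. h x * pmf (bern_prod n (min 1 (max 0 P))) x)"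
    by (rule integral_measure_pmf_real[OF fin])
       (use set_Pi_pmf_subset[of "{..<n}" False] in \<open>auto simp: S_def bern_prod_def\<close>)
  also have "\<dots> = (\<Sum>x\<in>S. h x * ((min 1 (max 0 P)) ^ card ({..<n} \<inter> {i. x i}) * (1 - min 1 (max 0 P)) ^ (n - card ({..<n} \<inter> {i. x i}))))"
    by (intro sum.cong refl, subst pmf_bp) (auto simp: S_def)
  finally show ?thesis .
qed

lemma dens_eq:
  assumes "(P::real) \<in> {0..1}" "k \<le> n"
  shows "beta_density a b P * (P ^ k * (1 - P) ^ (n - k)) = (1 / beta_fun a b) * Tm (a + real k) (b + real (n - k)) P"
proof -
  have e1: "P powr (a - 1) * P ^ k = P powr (a + real k - 1)"
    using pw[of P "a - 1" k] assms by (simp add: algebra_simps)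
  have e2: "(1 - P) powr (b - 1) * (1 - P) ^ (n - k) = (1 - P) powr (b + real (n - k) - 1)"
    using pw[of "1 - P" "b - 1" "n - k"] assms by (simp add: algebra_simps)
  have "beta_density a b P * (P ^ k * (1 - P) ^ (n - k)) =
     (P powr (a - 1) * P ^ k) * ((1 - P) powr (b - 1) * (1 - P) ^ (n - k)) / beta_fun a b"
    using assms by (simp add: beta_density_def)
  also have "\<dots> = (1 / beta_fun a b) * Tm (a + real k) (b + real (n - k)) P"
    unfolding e1 e2 using assms by (simp add: Tm_def)
  finally show ?thesis .
qed

end


lemma dens_eq_all:
  assumes "k \<le> n"
  shows "beta_density a b P * ((min 1 (max 0 P)) ^ k * (1 - min 1 (max 0 P)) ^ (n - k)) = (1 / beta_fun a b) * Tm (a + real k) (b + real (n - k)) P"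
proof (cases "P \<in> {0..1}")
  case True
  then have "min 1 (max 0 P) = P" by auto
  then show ?thesis using dens_eq[OF True assms] by simp
qed (simp add: beta_density_def Tm_def)

lemma sum_Tm:
  assumes "\<And>x. x \<in> S \<Longrightarrow> A x > 0 \<and> B x > 0"
  shows "(\<integral>P. (\<Sum>x\<in>S. d x * (u x * Tm (A x) (B x) P + v x * Tm (A x + 1) (B x) P)) \<partial>lborel)
       = (\<Sum>x\<in>S. d x * (u x * Beta (A x) (B x) + v x * Beta (A x + 1) (B x)))"
proof -
  have "(\<integral>P. (\<Sum>x\<in>S. d x * (u x * Tm (A x) (B x) P + v x * Tm (A x + 1) (B x) P)) \<partial>lborel)
     = (\<Sum>x\<in>S. (\<integral>P. d x * (u x * Tm (A x) (B x) P + v x * Tm (A x + 1) (B x) P) \<partial>lborel))"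
    by (rule Bochner_Integration.integral_sum) (use Tm_comb(1) assms in \<open>auto intro!: integrable_mult_right\<close>)
  also have "\<dots> = (\<Sum>x\<in>S. d x * (u x * Beta (A x) (B x) + v x * Beta (A x + 1) (B x)))"
    by (intro sum.cong refl) (use Tm_comb(2) assms in auto)
  finally show ?thesis .
qed

lemma alg:
  fixes a b k n Bt r q A :: real
  assumes "r * (a + b) = a" "q * (a + b + n) = A" "A = a + k"
  shows "k * Bt + (- n) * (q * Bt) = (a + b) * ((- r) * Bt + 1 * (q * Bt))"
proof -
  have "k * Bt + (- n) * (q * Bt) - (a + b) * ((- r) * Bt + 1 * (q * Bt))
      = Bt * (k + r * (a + b) - q * (a + b + n))" by (simp add: algebra_simps)
  also have "\<dots> = 0" using assms by simp
  finally show ?thesis by simp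
qed

lemma bd_meas: "beta_density a b \<in> borel_measurable lborel"
  unfolding beta_density_def by measurable

theorem lemma3p4:
  fixes n :: nat and f :: "(nat \<Rightarrow> bool) \<Rightarrow> real" and \<alpha> \<beta> :: real
    and g :: "real \<Rightarrow> real"
  assumes "\<alpha> > 0" and "\<beta> > 0"
    and "\<And>p. g p = measure_pmf.expectation (bern_prod n p) f"
  shows "(\<integral>P. measure_pmf.expectation (bern_prod n P)
              (\<lambda>X. f X * (\<Sum>i<n. (if X i then 1 else 0) - P)) \<partial>beta_measure \<alpha> \<beta>)
       = (\<alpha> + \<beta>) * (\<integral>P. g P * (P - \<alpha> / (\<alpha> + \<beta>)) \<partial>beta_measure \<alpha> \<beta>)"
proof -
  define S where "S = {x::nat\<Rightarrow>bool. \<forall>i. i \<notin> {..<n} \<longrightarrow> x i = False}"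
  have fin: "finite S"
  proof -
    have "S = PiE_dflt {..<n} False (\<lambda>_. UNIV)" by (auto simp: S_def PiE_dflt_def)
    then show ?thesis by auto
  qed
  define K where "K x = card ({..<n} \<inter> {i. x i})" for x :: "nat \<Rightarrow> bool"
  have Kle: "K x \<le> n" for x unfolding K_def
    by (metis card_lessThan card_mono finite_lessThan inf_le1)
  define Q where "Q P = min 1 (max 0 P)" for P :: real
  define W where "W x P = Q P ^ K x * (1 - Q P) ^ (n - K x)" for x P
  define c where "c = 1 / beta_fun \<alpha> \<beta>"
  define A where "A x = \<alpha> + real (K x)" for x
  define B where "B x = \<beta> + real (n - K x)" for x
  have Apos: "A x > 0" for x using assms unfolding A_def by auto
  have Bpos: "B x > 0" for x using assms unfolding B_def by auto
  have bf: "beta_fun \<alpha> \<beta> \<ge> 0"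
    unfolding beta_fun_def interval_lebesgue_integral_def set_lebesgue_integral_def
    by (auto intro!: Bochner_Integration.integral_nonneg simp: indicator_def)
  have dnn: "beta_density \<alpha> \<beta> P \<ge> 0" for P
    using bf by (auto simp: beta_density_def indicator_def)
  have key: "beta_density \<alpha> \<beta> P * W x P = c * Tm (A x) (B x) P" for x P
    unfolding W_def Q_def c_def A_def B_def using dens_eq_all[OF Kle] .
  have exp: "measure_pmf.expectation (bern_prod n P) h = (\<Sum>x\<in>S. h x * W x P)" for h P
    unfolding W_def Q_def K_def S_def by (rule bp_exp)
  have Wm: "(\<lambda>P. W x P) \<in> borel_measurable lborel" for x
    unfolding W_def Q_def by measurable
  note [measurable] = Wm bd_meas
  have LHS: "(\<integral>P. measure_pmf.expectation (bern_prod n P)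
              (\<lambda>X. f X * (\<Sum>i<n. (if X i then 1 else 0) - P)) \<partial>beta_measure \<alpha> \<beta>)
     = (\<Sum>x\<in>S. (f x * c) * (real (K x) * Beta (A x) (B x) + (- real n) * Beta (A x + 1) (B x)))"
  proof -
    have "(\<integral>P. measure_pmf.expectation (bern_prod n P)
              (\<lambda>X. f X * (\<Sum>i<n. (if X i then 1 else 0) - P)) \<partial>beta_measure \<alpha> \<beta>)
        = (\<integral>P. (\<Sum>x\<in>S. f x * (real (K x) - real n * P) * W x P) \<partial>beta_measure \<alpha> \<beta>)"
      by (intro Bochner_Integration.integral_cong refl) (simp add: exp sum_ind K_def)
    also have "\<dots> = (\<integral>P. beta_density \<alpha> \<beta> P * (\<Sum>x\<in>S. f x * (real (K x) - real n * P) * W x P) \<partial>lborel)"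
      unfolding beta_measure_def
      by (subst integral_density) (auto simp: dnn)
    also have "\<dots> = (\<integral>P. (\<Sum>x\<in>S. (f x * c) * (real (K x) * Tm (A x) (B x) P + (- real n) * Tm (A x + 1) (B x) P)) \<partial>lborel)"
    proof (intro Bochner_Integration.integral_cong refl)
      fix P
      have "beta_density \<alpha> \<beta> P * (\<Sum>x\<in>S. f x * (real (K x) - real n * P) * W x P)
         = (\<Sum>x\<in>S. f x * (real (K x) - real n * P) * (beta_density \<alpha> \<beta> P * W x P))"
        by (simp add: sum_distrib_left algebra_simps)
      also have "\<dots> = (\<Sum>x\<in>S. (f x * c) * (real (K x) * Tm (A x) (B x) P + (- real n) * Tm (A x + 1) (B x) P))"
        by (intro sum.cong refl) (simp only: key Tm_shift[symmetric], simp add: algebra_simps)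
      finally show "beta_density \<alpha> \<beta> P * (\<Sum>x\<in>S. f x * (real (K x) - real n * P) * W x P)
         = (\<Sum>x\<in>S. (f x * c) * (real (K x) * Tm (A x) (B x) P + (- real n) * Tm (A x + 1) (B x) P))" .
    qed
    also have "\<dots> = (\<Sum>x\<in>S. (f x * c) * (real (K x) * Beta (A x) (B x) + (- real n) * Beta (A x + 1) (B x)))"
      by (rule sum_Tm) (simp add: Apos Bpos)
    finally show ?thesis .
  qed
  have RHS: "(\<integral>P. g P * (P - \<alpha> / (\<alpha> + \<beta>)) \<partial>beta_measure \<alpha> \<beta>)
     = (\<Sum>x\<in>S. (f x * c) * ((- (\<alpha> / (\<alpha> + \<beta>))) * Beta (A x) (B x) + 1 * Beta (A x + 1) (B x)))"
  proof -
    have "(\<integral>P. g P * (P - \<alpha> / (\<alpha> + \<beta>)) \<partial>beta_measure \<alpha> \<beta>)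
        = (\<integral>P. (\<Sum>x\<in>S. f x * (P - \<alpha> / (\<alpha> + \<beta>)) * W x P) \<partial>beta_measure \<alpha> \<beta>)"
      by (intro Bochner_Integration.integral_cong refl) (simp only: assms(3) exp sum_distrib_right, simp add: ac_simps)
    also have "\<dots> = (\<integral>P. beta_density \<alpha> \<beta> P * (\<Sum>x\<in>S. f x * (P - \<alpha> / (\<alpha> + \<beta>)) * W x P) \<partial>lborel)"
      unfolding beta_measure_def
      by (subst integral_density) (auto simp: dnn)
    also have "\<dots> = (\<integral>P. (\<Sum>x\<in>S. (f x * c) * ((- (\<alpha> / (\<alpha> + \<beta>))) * Tm (A x) (B x) P + 1 * Tm (A x + 1) (B x) P)) \<partial>lborel)"
    proof (intro Bochner_Integration.integral_cong refl)
      fix P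
      have "beta_density \<alpha> \<beta> P * (\<Sum>x\<in>S. f x * (P - \<alpha> / (\<alpha> + \<beta>)) * W x P)
         = (\<Sum>x\<in>S. f x * (P - \<alpha> / (\<alpha> + \<beta>)) * (beta_density \<alpha> \<beta> P * W x P))"
        by (simp add: sum_distrib_left algebra_simps)
      also have "\<dots> = (\<Sum>x\<in>S. (f x * c) * ((- (\<alpha> / (\<alpha> + \<beta>))) * Tm (A x) (B x) P + 1 * Tm (A x + 1) (B x) P))"
        by (intro sum.cong refl) (simp only: key Tm_shift[symmetric], simp add: algebra_simps)
      finally show "beta_density \<alpha> \<beta> P * (\<Sum>x\<in>S. f x * (P - \<alpha> / (\<alpha> + \<beta>)) * W x P)
         = (\<Sum>x\<in>S. (f x * c) * ((- (\<alpha> / (\<alpha> + \<beta>))) * Tm (A x) (B x) P + 1 * Tm (A x + 1) (B x) P))" .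
    qed
    also have "\<dots> = (\<Sum>x\<in>S. (f x * c) * ((- (\<alpha> / (\<alpha> + \<beta>))) * Beta (A x) (B x) + 1 * Beta (A x + 1) (B x)))"
      by (rule sum_Tm) (simp add: Apos Bpos)
    finally show ?thesis .
  qed
  have termeq: "real (K x) * Beta (A x) (B x) + (- real n) * Beta (A x + 1) (B x)
      = (\<alpha> + \<beta>) * ((- (\<alpha> / (\<alpha> + \<beta>))) * Beta (A x) (B x) + 1 * Beta (A x + 1) (B x))" for x
  proof -
    have nz: "A x \<notin> \<int>\<^sub>\<le>\<^sub>0" using Apos[of x] by (auto elim!: nonpos_Ints_cases)
    have AB: "A x + B x = \<alpha> + \<beta> + real n" unfolding A_def B_def using Kle[of x] by auto
    have s: "Beta (A x + 1) (B x) = A x / (\<alpha> + \<beta> + real n) * Beta (A x) (B x)"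
      using Beta_plus1_left[OF nz, of "B x"] AB assms
      by (simp add: field_simps)
    show ?thesis unfolding s
      by (rule alg[where A="A x"]) (use assms AB in \<open>auto simp: A_def\<close>)
  qed
  show ?thesis unfolding LHS RHS
    by (subst sum_distrib_left, intro sum.cong refl, subst termeq, rule mult.left_commute)
qed

end
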